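(* Let $\mathcal{P}=\mathbb{Z}_{41}\times\mathbb{Z}_{11}$, let $a$ be a primitive element of $\mathbb{Z}_{41}$ and $b$ a primitive element of $\mathbb{Z}_{11}$, and fix $i\in\{1,2,3,4\}$. Define permutations of $\mathcal{P}$ by $\alpha:(e,f)\mapsto(e+1,f)$, $\beta:(e,f)\mapsto(e,f+1)$, $\iota:(e,f)\mapsto(-e,f)$ and $\gamma_i:(e,f)\mapsto(a^8e,b^{2i}f)$. Let $G$ be either $\langle\alpha,\beta,\iota,\gamma_i\rangle$ or $\langle\alpha,\beta,\gamma_i\rangle$. Let $H=\mathrm{AGL}(1,41)\times\mathrm{AGL}(1,11)$ be the group of all permutations of $\mathcal{P}$ of the form $(e,f)\mapsto(ue+s,wf+t)$ with $u\in\mathbb{Z}_{41}\setminus\{0\}$, $s\in\mathbb{Z}_{41}$, $w\in\mathbb{Z}_{11}\setminus\{0\}$, $t\in\mathbb{Z}_{11}$. Then the normaliser of $G$ in $\mathrm{Sym}(\mathcal{P})$ equals $H$. *)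

theory Defs
  imports "HOL-Algebra.Algebra" "HOL-Number_Theory.Number_Theory"
begin

definition Pts :: "(nat \<times> nat) set" where
  "Pts = {0..<41} \<times> {0..<11}"

text \<open>Permutations of Pts are elements of Bij Pts (extensional functions), i.e. carrier of BijGroup Pts.\<close>
definition alpha :: "nat \<times> nat \<Rightarrow> nat \<times> nat" where
  "alpha = restrict (\<lambda>(e, f). ((e + 1) mod 41, f)) Pts"

definition beta :: "nat \<times> nat \<Rightarrow> nat \<times> nat" where
  "beta = restrict (\<lambda>(e, f). (e, (f + 1) mod 11)) Pts"

definition iota :: "nat \<times> nat \<Rightarrow> nat \<times> nat" where
  "iota = restrict (\<lambda>(e, f). ((41 - e) mod 41, f)) Pts"

definition gamma :: "nat \<Rightarrow> nat \<Rightarrow> nat \<Rightarrow> nat \<times> nat \<Rightarrow> nat \<times> nat" where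
  "gamma a b i = restrict (\<lambda>(e, f). ((a ^ 8 * e) mod 41, (b ^ (2 * i) * f) mod 11)) Pts"

definition AGL_prod :: "(nat \<times> nat \<Rightarrow> nat \<times> nat) set" where
  "AGL_prod = {restrict (\<lambda>(e, f). ((u * e + s) mod 41, (w * f + t) mod 11)) Pts
               | u s w t. u \<in> {1..<41} \<and> s < 41 \<and> w \<in> {1..<11} \<and> t < 11}"

end

theory Submission
  imports Defs
begin


abbreviation SG :: "(nat \<times> nat \<Rightarrow> nat \<times> nat) monoid" where "SG \<equiv> BijGroup Pts"

definition aff :: "nat \<Rightarrow> nat \<Rightarrow> nat \<Rightarrow> nat \<Rightarrow> nat \<times> nat \<Rightarrow> nat \<times> nat" where
  "aff u s w t = restrict (\<lambda>(e, f). ((u  *  e + s) mod 41, (w  *  f + t) mod 11)) Pts"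

lemma p41: "Factorial_Ring.prime (41::nat)" by simp
lemma p11: "Factorial_Ring.prime (11::nat)" by simp

lemma mult_SG: "f \<in> Bij Pts \<Longrightarrow> g \<in> Bij Pts \<Longrightarrow> f \<otimes>\<^bsub>SG\<^esub> g = compose Pts f g"
  by (simp add: BijGroup_def)
lemma one_SG: "\<one>\<^bsub>SG\<^esub> = (\<lambda>x\<in>Pts. x)" by (simp add: BijGroup_def)
lemma carrier_SG: "carrier SG = Bij Pts" by (simp add: BijGroup_def)

lemma aff_apply: "e < 41 \<Longrightarrow> f < 11 \<Longrightarrow> aff u s w t (e, f) = ((u * e + s) mod 41, (w * f + t) mod 11)"
  by (simp add: aff_def Pts_def)

lemma aff_in: "x \<in> Pts \<Longrightarrow> aff u s w t x \<in> Pts"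
  by (auto simp: aff_def Pts_def split: prod.splits)

lemma aff_inj:
  assumes "coprime u 41" "coprime w 11"
  shows "inj_on (aff u s w t) Pts"
proof (rule inj_onI)
  fix x y assume x: "x \<in> Pts" and y: "y \<in> Pts" and eq: "aff u s w t x = aff u s w t y"
  obtain e f where xe: "x = (e,f)" by (cases x)
  obtain e' f' where ye: "y = (e',f')" by (cases y)
  have b: "e < 41" "f < 11" "e' < 41" "f' < 11" using x y xe ye by (auto simp: Pts_def)
  have "(u * e + s) mod 41 = (u * e'+s) mod 41" "(w * f + t) mod 11 = (w * f'+t) mod 11"
    using eq b by (simp_all add: xe ye aff_apply)
  then have "[u * e + s = u * e'+s] (mod 41)" "[w * f + t = w * f'+t] (mod 11)" by (simp_all add: cong_def)
  then have "[u * e = u * e'] (mod 41)" "[w * f = w * f'] (mod 11)" by (simp_all add: cong_add_rcancel_nat)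
  then have "[e = e'] (mod 41)" "[f = f'] (mod 11)" using assms
    by (simp_all add: cong_mult_lcancel_nat)
  then have "e = e'" "f = f'" using b by (simp_all add: cong_less_modulus_unique_nat)
  then show "x = y" using xe ye by simp
qed

lemma aff_Bij:
  assumes "coprime u 41" "coprime w 11"
  shows "aff u s w t \<in> Bij Pts"
proof -
  have fin: "finite Pts" by (simp add: Pts_def)
  have sub: "aff u s w t ` Pts \<subseteq> Pts" using aff_in by blast
  have "aff u s w t ` Pts = Pts" using endo_inj_surj[OF fin sub aff_inj[OF assms]] .
  then have "bij_betw (aff u s w t) Pts Pts" using aff_inj[OF assms] by (simp add: bij_betw_def)
  moreover have "aff u s w t \<in> extensional Pts" by (simp add: aff_def)
  ultimately show ?thesis by (simp add: Bij_def)
qed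

lemma aff_compose:
  "compose Pts (aff m1 c m2 d) (aff n1 q1 n2 q2) = aff (m1 * n1) (m1 * q1 + c) (m2 * n2) (m2 * q2 + d)"
proof (rule ext)
  fix x show "compose Pts (aff m1 c m2 d) (aff n1 q1 n2 q2) x = aff (m1 * n1) (m1 * q1 + c) (m2 * n2) (m2 * q2 + d) x"
  proof (cases "x \<in> Pts")
    case True
    obtain e f where xe: "x = (e,f)" by (cases x)
    have b: "e < 41" "f < 11" using True xe by (auto simp: Pts_def)
    have mm: "(m * ((n * e + q) mod N) + c) mod N = (m * n * e + (m * q + c)) mod N" for m n e q c N :: nat
    proof -
      have "(m * ((n * e + q) mod N) + c) mod N = ((m * ((n * e + q) mod N)) mod N + c) mod N"
        by (rule mod_add_left_eq[symmetric])
      also have "\<dots> = ((m * (n * e + q)) mod N + c) mod N" by (simp only: mod_mult_right_eq)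
      also have "\<dots> = (m * (n * e + q) + c) mod N" by (rule mod_add_left_eq)
      also have "\<dots> = (m * n * e + (m * q + c)) mod N" by (simp add: algebra_simps)
      finally show ?thesis .
    qed
    note 1 = mm[where m=m1 and n=n1 and e=e and q=q1 and c=c and N=41] and 2 = mm[where m=m2 and n=n2 and e=f and q=q2 and c=d and N=11]
    show ?thesis using True b 1 2 by (simp add: compose_def xe aff_apply)
  next
    case False
    then show ?thesis by (simp add: compose_def aff_def)
  qed
qed


lemma aff_cong:
  assumes "[m1 = n1] (mod 41)" "[c = q1] (mod 41)" "[m2 = n2] (mod 11)" "[d = q2] (mod 11)"
  shows "aff m1 c m2 d = aff n1 q1 n2 q2"
proof -
  have "[m1 * e + c = n1 * e + q1] (mod 41)" for e using assms by (intro cong_add cong_mult cong_refl)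
  moreover have "[m2 * e + d = n2 * e + q2] (mod 11)" for e using assms by (intro cong_add cong_mult cong_refl)
  ultimately show ?thesis unfolding aff_def cong_def by (intro restrict_ext) (auto split: prod.splits)
qed

lemma one_aff: "\<one>\<^bsub>SG\<^esub> = aff 1 0 1 0"
  unfolding one_SG aff_def by (intro restrict_ext) (auto simp: Pts_def)

lemma alpha_aff: "alpha = aff 1 1 1 0"
  unfolding alpha_def aff_def by (intro restrict_ext) (auto simp: Pts_def)
lemma beta_aff: "beta = aff 1 0 1 1"
  unfolding beta_def aff_def by (intro restrict_ext) (auto simp: Pts_def)
lemma gamma_aff: "gamma a b i = aff (a^8) 0 (b^(2 * i)) 0"
  unfolding gamma_def aff_def by (intro restrict_ext) (auto simp: Pts_def)

lemma iota_aux: "(x::nat) < 41 \<Longrightarrow> (41 - x) mod 41 = (40  *  x) mod 41"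
proof (cases "x = 0")
  case False
  assume "x < 41"
  then have e: "40 * x = (41 - x) + 41 * (x-1)" using False by simp
  have "((41 - x) + 41 * (x-1)) mod 41 = (41 - x) mod 41" by simp
  then show ?thesis using e by simp
qed simp

lemma iota_aff: "iota = aff 40 0 1 0"
  unfolding iota_def aff_def by (intro restrict_ext) (auto simp: Pts_def iota_aux)

lemma negmod: "[x + (n - x mod n) = (0::nat)] (mod n)" if "n > 0"
proof -
  have "x mod n < n" using that by simp
  then have "x + (n - x mod n) = n * (x div n) + n"
    using mult_div_mod_eq[of n x] by linarith
  then show ?thesis by (simp add: cong_def)
qed



lemma (in group) cancel_left_inv: "g \<in> carrier G \<Longrightarrow> y \<in> carrier G \<Longrightarrow> inv g \<otimes> (g \<otimes> y) = y"
  by (simp add: m_assoc[symmetric])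

lemma (in group) cancel_left: "g \<in> carrier G \<Longrightarrow> y \<in> carrier G \<Longrightarrow> g \<otimes> (inv g \<otimes> y) = y"
  by (simp add: m_assoc[symmetric])

lemma (in group) conj_pow:
  assumes "g \<in> carrier G" "x \<in> carrier G"
  shows "(g \<otimes> x \<otimes> inv g) [^] (n::nat) = g \<otimes> x [^] n \<otimes> inv g"
proof (induction n)
  case 0 show ?case using assms by simp
next
  case (Suc n)
  have "(g \<otimes> x \<otimes> inv g) [^] Suc n = g \<otimes> x [^] n \<otimes> inv g \<otimes> (g \<otimes> x \<otimes> inv g)" using Suc by simp
  also have "\<dots> = g \<otimes> (x [^] n \<otimes> (inv g \<otimes> (g \<otimes> (x \<otimes> inv g))))" using assms by (simp add: m_assoc)
  also have "\<dots> = g \<otimes> (x [^] n \<otimes> (x \<otimes> inv g))" using assms by (simp add: cancel_left_inv)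
  also have "\<dots> = g \<otimes> x [^] Suc n \<otimes> inv g" using assms by (simp add: m_assoc)
  finally show ?case .
qed

lemma (in group) conj_from_comm:
  assumes "h \<in> carrier G" "k \<in> carrier G" "T \<in> carrier G" "h \<otimes> k = T \<otimes> h"
  shows "h \<otimes> k \<otimes> inv h = T"
  using assms by (simp add: m_assoc)

lemma (in group) conj_inv:
  assumes "h \<in> carrier G" "k \<in> carrier G"
  shows "h \<otimes> inv k \<otimes> inv h = inv (h \<otimes> k \<otimes> inv h)"
  using assms by (simp add: inv_mult_group m_assoc)

lemma (in group) conj_mult:
  assumes "h \<in> carrier G" "x \<in> carrier G" "y \<in> carrier G"
  shows "h \<otimes> (x \<otimes> y) \<otimes> inv h = (h \<otimes> x \<otimes> inv h) \<otimes> (h \<otimes> y \<otimes> inv h)"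
  using assms by (simp add: m_assoc cancel_left_inv)

lemma (in group) conj_comm2:
  assumes "s \<in> carrier G" "x \<in> carrier G"
  shows "(s \<otimes> x \<otimes> inv s) \<otimes> s = s \<otimes> x"
  using assms by (simp add: m_assoc)

lemma (in group) conj_back:
  assumes "h \<in> carrier G" "g \<in> carrier G"
  shows "g = h \<otimes> (inv h \<otimes> g \<otimes> inv (inv h)) \<otimes> inv h"
  using assms by (simp add: m_assoc cancel_left_inv cancel_left)

lemma grp: "group SG" by (rule group_BijGroup)

lemma aff_mult:
  assumes "coprime m1 41" "coprime m2 11" "coprime n1 41" "coprime n2 11"
  shows "aff m1 c m2 d \<otimes>\<^bsub>SG\<^esub> aff n1 q1 n2 q2 = aff (m1 * n1) (m1 * q1 + c) (m2 * n2) (m2 * q2 + d)"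
  using assms by (simp add: mult_SG aff_Bij aff_compose)

lemma trans_pow: "aff 1 c 1 d [^]\<^bsub>SG\<^esub> (n::nat) = aff 1 (n * c) 1 (n * d)"
proof (induction n)
  case 0 show ?case by (simp add: one_aff)
next
  case (Suc n)
  have "aff 1 c 1 d [^]\<^bsub>SG\<^esub> Suc n = aff 1 (n * c) 1 (n * d) \<otimes>\<^bsub>SG\<^esub> aff 1 c 1 d" using Suc by simp
  also have "\<dots> = aff 1 (Suc n * c) 1 (Suc n * d)" by (simp add: aff_mult algebra_simps)
  finally show ?case .
qed

lemma aff_pow:
  assumes "coprime m1 41" "coprime m2 11"
  shows "\<exists>C D. aff m1 c m2 d [^]\<^bsub>SG\<^esub> (n::nat) = aff (m1 ^ n) C (m2 ^ n) D"
proof (induction n)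
  case 0 show ?case by (auto simp: one_aff)
next
  case (Suc n)
  then obtain C D where "aff m1 c m2 d [^]\<^bsub>SG\<^esub> n = aff (m1 ^ n) C (m2 ^ n) D" by blast
  then have "aff m1 c m2 d [^]\<^bsub>SG\<^esub> Suc n = aff (m1 ^ n * m1) (m1 ^ n * c + C) (m2 ^ n * m2) (m2 ^ n * d + D)"
    using assms by (simp add: aff_mult)
  then show ?case by (auto simp: mult.commute)
qed

definition A10 :: "(nat \<times> nat \<Rightarrow> nat \<times> nat) \<Rightarrow> bool" where
  "A10 g \<longleftrightarrow> (\<exists>m1 c m2 d. g = aff m1 c m2 d \<and> [m1 ^ 10 = 1] (mod 41) \<and> [m2 ^ 10 = 1] (mod 11))"

lemma cop10: "[m ^ 10 = 1] (mod n) \<Longrightarrow> coprime m (n::nat)"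
proof -
  assume "[m ^ 10 = 1] (mod n)"
  then have "coprime (m ^ 10) n" using cong_imp_coprime[of 1 "m ^ 10" n] cong_sym by auto
  then show ?thesis by simp
qed

lemma A10_Bij: "A10 g \<Longrightarrow> g \<in> carrier SG"
  unfolding A10_def carrier_SG using cop10 aff_Bij by blast

lemma A10_mult: "A10 g \<Longrightarrow> A10 h \<Longrightarrow> A10 (g \<otimes>\<^bsub>SG\<^esub> h)"
proof -
  assume "A10 g" "A10 h"
  then obtain m1 c m2 d n1 q1 n2 q2 where g: "g = aff m1 c m2 d" and h: "h = aff n1 q1 n2 q2"
    and c: "[m1 ^ 10 = 1] (mod 41)" "[m2 ^ 10 = 1] (mod 11)" "[n1 ^ 10 = 1] (mod 41)" "[n2 ^ 10 = 1] (mod 11)"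
    unfolding A10_def by blast
  have "g \<otimes>\<^bsub>SG\<^esub> h = aff (m1 * n1) (m1 * q1 + c) (m2 * n2) (m2 * q2 + d)"
    using g h c cop10 by (simp add: aff_mult)
  moreover have "[(m1 * n1) ^ 10 = 1] (mod 41)" using cong_mult[OF c(1) c(3)] by (simp add: power_mult_distrib)
  moreover have "[(m2 * n2) ^ 10 = 1] (mod 11)" using cong_mult[OF c(2) c(4)] by (simp add: power_mult_distrib)
  ultimately show ?thesis unfolding A10_def by blast
qed

lemma aff_inv:
  assumes "[m1 * n1 = 1] (mod 41)" "[m2 * n2 = 1] (mod 11)"
  shows "inv\<^bsub>SG\<^esub> (aff m1 c m2 d) = aff n1 (41 - (n1 * c) mod 41) n2 (11 - (n2 * d) mod 11)"
proof -
  have "coprime (m1 * n1) 41" using cong_imp_coprime[OF cong_sym[OF assms(1)]] by simp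
  moreover have "coprime (m2 * n2) 11" using cong_imp_coprime[OF cong_sym[OF assms(2)]] by simp
  ultimately have cm: "coprime m1 41" "coprime n1 41" "coprime m2 11" "coprime n2 11" by auto
  have "aff n1 (41 - (n1 * c) mod 41) n2 (11 - (n2 * d) mod 11) \<otimes>\<^bsub>SG\<^esub> aff m1 c m2 d
      = aff (n1 * m1) (n1 * c + (41 - (n1 * c) mod 41)) (n2 * m2) (n2 * d + (11 - (n2 * d) mod 11))"
    using cm by (simp add: aff_mult)
  also have "\<dots> = aff 1 0 1 0"
    apply (rule aff_cong)
    using assms(1) apply (simp add: mult.commute)
     apply (rule negmod, simp)
    using assms(2) apply (simp add: mult.commute)
    apply (rule negmod, simp)
    done
  finally have "aff n1 (41 - (n1 * c) mod 41) n2 (11 - (n2 * d) mod 11) \<otimes>\<^bsub>SG\<^esub> aff m1 c m2 d = \<one>\<^bsub>SG\<^esub>"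
    by (simp add: one_aff)
  then show ?thesis using group.inv_equality[OF grp] cm aff_Bij carrier_SG by simp
qed

lemma A10_inv: "A10 g \<Longrightarrow> A10 (inv\<^bsub>SG\<^esub> g)"
proof -
  assume "A10 g"
  then obtain m1 c m2 d where g: "g = aff m1 c m2 d"
    and c: "[m1 ^ 10 = 1] (mod 41)" "[m2 ^ 10 = 1] (mod 11)"
    unfolding A10_def by blast
  have e1: "m1 * m1 ^ 9 = m1 ^ 10" "m2 * m2 ^ 9 = m2 ^ 10" by (simp_all add: power_Suc[symmetric])
  have i: "inv\<^bsub>SG\<^esub> g = aff (m1 ^ 9) (41 - (m1 ^ 9 * c) mod 41) (m2 ^ 9) (11 - (m2 ^ 9 * d) mod 11)"
    unfolding g using c e1 by (intro aff_inv) simp_all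
  have e2: "(m1 ^ 9) ^ 10 = (m1 ^ 10) ^ 9" "(m2 ^ 9) ^ 10 = (m2 ^ 10) ^ 9" by (simp_all flip: power_mult)
  have "[(m1 ^ 9) ^ 10 = 1] (mod 41)" unfolding e2 using cong_pow[OF c(1), of 9] by simp
  moreover have "[(m2 ^ 9) ^ 10 = 1] (mod 11)" unfolding e2 using cong_pow[OF c(2), of 9] by simp
  ultimately show ?thesis unfolding A10_def i by blast
qed

lemma A10_trans:
  assumes "A10 g" "g [^]\<^bsub>SG\<^esub> (451::nat) = \<one>\<^bsub>SG\<^esub>"
  shows "\<exists>c d. g = aff 1 c 1 d"
proof -
  obtain m1 c m2 d where g: "g = aff m1 c m2 d" and c: "[m1 ^ 10 = 1] (mod 41)" "[m2 ^ 10 = 1] (mod 11)"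
    using assms(1) unfolding A10_def by blast
  obtain C D where p: "g [^]\<^bsub>SG\<^esub> (451::nat) = aff (m1 ^ 451) C (m2 ^ 451) D"
    using aff_pow[OF cop10[OF c(1)] cop10[OF c(2)]] g by blast
  have e: "aff (m1 ^ 451) C (m2 ^ 451) D = aff 1 0 1 0" using p assms(2) one_aff by simp
  have e0: "aff (m1 ^ 451) C (m2 ^ 451) D (0,0) = aff 1 0 1 0 (0,0)" using e by simp
  have e1: "aff (m1 ^ 451) C (m2 ^ 451) D (1,1) = aff 1 0 1 0 (1,1)" using e by simp
  from e0 have C: "C mod 41 = 0" "D mod 11 = 0" by (simp_all add: aff_apply)
  from e1 have "(m1 ^ 451 + C) mod 41 = 1" "(m2 ^ 451 + D) mod 11 = 1" by (simp_all add: aff_apply)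
  moreover have "(m1 ^ 451 + C) mod 41 = (m1 ^ 451 + C mod 41) mod 41" by (rule mod_add_right_eq[symmetric])
  moreover have "(m2 ^ 451 + D) mod 11 = (m2 ^ 451 + D mod 11) mod 11" by (rule mod_add_right_eq[symmetric])
  ultimately have m: "m1 ^ 451 mod 41 = 1" "m2 ^ 451 mod 11 = 1" using C by simp_all
  have pw: "x ^ 451 = (x ^ 10) ^ 45 * x" for x :: nat
  proof -
    have "x ^ 451 = x ^ (10 * 45 + 1)" by simp
    also have "\<dots> = (x ^ 10) ^ 45 * x" by (simp only: power_add power_mult power_one_right)
    finally show ?thesis .
  qed
  have "[m1 ^ 451 = 1 ^ 45 * m1] (mod 41)" unfolding pw by (intro cong_mult cong_pow c cong_refl)
  then have m1: "[m1 = 1] (mod 41)" using m by (simp add: cong_def)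
  have "[m2 ^ 451 = 1 ^ 45 * m2] (mod 11)" unfolding pw by (intro cong_mult cong_pow c cong_refl)
  then have m2: "[m2 = 1] (mod 11)" using m by (simp add: cong_def)
  have "g = aff 1 c 1 d" unfolding g using m1 m2 by (intro aff_cong) simp_all
  then show ?thesis by blast
qed



lemma cop41: "0 < u \<Longrightarrow> u < 41 \<Longrightarrow> coprime u (41::nat)"
proof -
  assume "0 < u" "u < 41"
  then have "\<not> 41 dvd u" by (auto dest: dvd_imp_le)
  then have "coprime 41 u" by (rule prime_imp_coprime_nat[OF p41])
  then show ?thesis by (simp add: coprime_commute)
qed

lemma cop11: "0 < u \<Longrightarrow> u < 11 \<Longrightarrow> coprime u (11::nat)"
proof -
  assume "0 < u" "u < 11"
  then have "\<not> 11 dvd u" by (auto dest: dvd_imp_le)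
  then have "coprime 11 u" by (rule prime_imp_coprime_nat[OF p11])
  then show ?thesis by (simp add: coprime_commute)
qed

lemma AGL_alt: "h \<in> AGL_prod \<longleftrightarrow> (\<exists>u s w t. h = aff u s w t \<and> u \<in> {1..<41} \<and> s < 41 \<and> w \<in> {1..<11} \<and> t < 11)"
  unfolding AGL_prod_def aff_def by blast

lemma alpha_pow: "alpha [^]\<^bsub>SG\<^esub> (n::nat) = aff 1 n 1 0"
  unfolding alpha_aff trans_pow by simp
lemma beta_pow: "beta [^]\<^bsub>SG\<^esub> (n::nat) = aff 1 0 1 n"
  unfolding beta_aff trans_pow by simp

lemma alpha_451: "alpha [^]\<^bsub>SG\<^esub> (451::nat) = \<one>\<^bsub>SG\<^esub>"
  unfolding alpha_pow one_aff by (rule aff_cong) (simp_all add: cong_def)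
lemma alpha_41: "alpha [^]\<^bsub>SG\<^esub> (41::nat) = \<one>\<^bsub>SG\<^esub>"
  unfolding alpha_pow one_aff by (rule aff_cong) (simp_all add: cong_def)
lemma beta_451: "beta [^]\<^bsub>SG\<^esub> (451::nat) = \<one>\<^bsub>SG\<^esub>"
  unfolding beta_pow one_aff by (rule aff_cong) (simp_all add: cong_def)
lemma beta_11: "beta [^]\<^bsub>SG\<^esub> (11::nat) = \<one>\<^bsub>SG\<^esub>"
  unfolding beta_pow one_aff by (rule aff_cong) (simp_all add: cong_def)

lemma alpha_car: "alpha \<in> carrier SG" unfolding alpha_aff carrier_SG by (rule aff_Bij) simp_all
lemma beta_car: "beta \<in> carrier SG" unfolding beta_aff carrier_SG by (rule aff_Bij) simp_all

lemma conj_in: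
  assumes sub: "subgroup G SG" and sig: "\<sigma> \<in> normalizer SG G" and x: "x \<in> G"
  shows "\<sigma> \<in> carrier SG" "\<sigma> \<otimes>\<^bsub>SG\<^esub> x \<otimes>\<^bsub>SG\<^esub> inv\<^bsub>SG\<^esub> \<sigma> \<in> G"
proof -
  have Gc: "G \<subseteq> carrier SG" using subgroup.subset[OF sub] .
  have s: "\<sigma> \<in> carrier SG" and eq: "\<sigma> <#\<^bsub>SG\<^esub> G #>\<^bsub>SG\<^esub> inv\<^bsub>SG\<^esub> \<sigma> = G"
    using sig Gc unfolding normalizer_def stabilizer_def by auto
  show "\<sigma> \<in> carrier SG" by (rule s)
  have "\<sigma> \<otimes>\<^bsub>SG\<^esub> x \<otimes>\<^bsub>SG\<^esub> inv\<^bsub>SG\<^esub> \<sigma> \<in> \<sigma> <#\<^bsub>SG\<^esub> G #>\<^bsub>SG\<^esub> inv\<^bsub>SG\<^esub> \<sigma>"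
    using x unfolding l_coset_def r_coset_def by blast
  then show "\<sigma> \<otimes>\<^bsub>SG\<^esub> x \<otimes>\<^bsub>SG\<^esub> inv\<^bsub>SG\<^esub> \<sigma> \<in> G" using eq by simp
qed

lemma conj_trans:
  assumes GA: "\<forall>g\<in>G. A10 g" and sub: "subgroup G SG" and sig: "\<sigma> \<in> normalizer SG G"
    and x: "x \<in> G" and x451: "x [^]\<^bsub>SG\<^esub> (451::nat) = \<one>\<^bsub>SG\<^esub>"
  shows "\<exists>c d. \<sigma> \<otimes>\<^bsub>SG\<^esub> x \<otimes>\<^bsub>SG\<^esub> inv\<^bsub>SG\<^esub> \<sigma> = aff 1 c 1 d"
proof -
  interpret S: group SG by (rule grp)
  have s: "\<sigma> \<in> carrier SG" and A: "\<sigma> \<otimes>\<^bsub>SG\<^esub> x \<otimes>\<^bsub>SG\<^esub> inv\<^bsub>SG\<^esub> \<sigma> \<in> G"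
    using conj_in[OF sub sig x] by auto
  have xc: "x \<in> carrier SG" using x subgroup.subset[OF sub] by blast
  have "(\<sigma> \<otimes>\<^bsub>SG\<^esub> x \<otimes>\<^bsub>SG\<^esub> inv\<^bsub>SG\<^esub> \<sigma>) [^]\<^bsub>SG\<^esub> (451::nat) = \<one>\<^bsub>SG\<^esub>"
    using S.conj_pow[OF s xc] x451 s by simp
  then show ?thesis using A10_trans GA A by blast
qed

lemma dir2:
  assumes GA: "\<forall>g\<in>G. A10 g" and al: "alpha \<in> G" and be: "beta \<in> G"
    and sub: "subgroup G SG" and sig: "\<sigma> \<in> normalizer SG G"
  shows "\<sigma> \<in> AGL_prod"
proof -
  interpret S: group SG by (rule grp)
  have s: "\<sigma> \<in> carrier SG" using conj_in[OF sub sig al] by auto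
  define A where "A = \<sigma> \<otimes>\<^bsub>SG\<^esub> alpha \<otimes>\<^bsub>SG\<^esub> inv\<^bsub>SG\<^esub> \<sigma>"
  define B where "B = \<sigma> \<otimes>\<^bsub>SG\<^esub> beta \<otimes>\<^bsub>SG\<^esub> inv\<^bsub>SG\<^esub> \<sigma>"
  obtain c1 d1 where A1: "A = aff 1 c1 1 d1"
    using conj_trans[OF GA sub sig al alpha_451] unfolding A_def by blast
  obtain c2 d2 where B1: "B = aff 1 c2 1 d2"
    using conj_trans[OF GA sub sig be beta_451] unfolding B_def by blast
  have "A [^]\<^bsub>SG\<^esub> (41::nat) = \<one>\<^bsub>SG\<^esub>"
    unfolding A_def using S.conj_pow[OF s alpha_car] alpha_41 s by simp
  then have "aff 1 (41 * c1) 1 (41 * d1) (0,0) = aff 1 0 1 0 (0,0)" unfolding A1 trans_pow one_aff by simp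
  then have "(41 * d1) mod 11 = 0" by (simp add: aff_apply)
  then have "11 dvd 41 * d1" by (simp add: dvd_eq_mod_eq_0)
  then have "11 dvd d1" using prime_dvd_mult_iff[OF p11] by simp
  then have A2: "A = aff 1 c1 1 0" unfolding A1 by (intro aff_cong) (simp_all add: cong_def dvd_eq_mod_eq_0)
  have "B [^]\<^bsub>SG\<^esub> (11::nat) = \<one>\<^bsub>SG\<^esub>"
    unfolding B_def using S.conj_pow[OF s beta_car] beta_11 s by simp
  then have "aff 1 (11 * c2) 1 (11 * d2) (0,0) = aff 1 0 1 0 (0,0)" unfolding B1 trans_pow one_aff by simp
  then have "(11 * c2) mod 41 = 0" by (simp add: aff_apply)
  then have "41 dvd 11 * c2" by (simp add: dvd_eq_mod_eq_0)
  then have "41 dvd c2" using prime_dvd_mult_iff[OF p41] by simp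
  then have B2: "B = aff 1 0 1 d2" unfolding B1 by (intro aff_cong) (simp_all add: cong_def dvd_eq_mod_eq_0)
  have sB: "\<sigma> \<in> Bij Pts" using s carrier_SG by simp
  have Ac: "A \<otimes>\<^bsub>SG\<^esub> \<sigma> = \<sigma> \<otimes>\<^bsub>SG\<^esub> alpha" unfolding A_def by (rule S.conj_comm2[OF s alpha_car])
  have Bc: "B \<otimes>\<^bsub>SG\<^esub> \<sigma> = \<sigma> \<otimes>\<^bsub>SG\<^esub> beta" unfolding B_def by (rule S.conj_comm2[OF s beta_car])
  have ABij: "A \<in> Bij Pts" "B \<in> Bij Pts" unfolding A2 B2 by (rule aff_Bij, simp, simp)+
  have "compose Pts A \<sigma> = compose Pts \<sigma> alpha" using Ac ABij sB alpha_car carrier_SG by (simp add: mult_SG)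
  then have Ax: "A (\<sigma> x) = \<sigma> (alpha x)" if "x \<in> Pts" for x
    by (metis compose_eq that)
  have "compose Pts B \<sigma> = compose Pts \<sigma> beta" using Bc ABij sB beta_car carrier_SG by (simp add: mult_SG)
  then have Bx: "B (\<sigma> x) = \<sigma> (beta x)" if "x \<in> Pts" for x
    by (metis compose_eq that)
  have sP: "\<sigma> x \<in> Pts" if "x \<in> Pts" for x using Bij_imp_funcset[OF sB] that by blast
  obtain s0 t0 where st: "\<sigma> (0,0) = (s0, t0)" by (cases "\<sigma> (0,0)")
  have st_b: "s0 < 41" "t0 < 11" using sP[of "(0,0)"] st by (auto simp: Pts_def)
  have claim1: "f < 11 \<longrightarrow> \<sigma> (0, f) = (s0, (d2 * f + t0) mod 11)" for f
  proof (induction f)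
    case 0 show ?case using st st_b by simp
  next
    case (Suc f)
    show ?case
    proof
      assume f: "Suc f < 11"
      then have IH: "\<sigma> (0, f) = (s0, (d2 * f + t0) mod 11)" using Suc by simp
      have "beta (0, f) = (0, Suc f)" using f by (simp add: beta_aff aff_apply)
      then have "\<sigma> (0, Suc f) = B (\<sigma> (0, f))" using Bx[of "(0,f)"] f by (simp add: Pts_def)
      also have "\<dots> = (s0, ((d2 * f + t0) mod 11 + d2) mod 11)" using IH st_b by (simp add: B2 aff_apply)
      also have "((d2 * f + t0) mod 11 + d2) mod 11 = (d2 * Suc f + t0) mod 11"
        using mod_add_left_eq[of "d2 * f + t0" 11 d2] by (simp add: algebra_simps)
      finally show "\<sigma> (0, Suc f) = (s0, (d2 * Suc f + t0) mod 11)" .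
    qed
  qed
  have T1: "\<sigma> (0, f) = (s0, (d2 * f + t0) mod 11)" if f: "f < 11" for f by (rule mp[OF claim1[of f] f])
  have T2: "(c1 * 0 + s0) mod 41 = s0" using st_b(1) by simp
  have claim2: "\<sigma> (e, f) = ((c1 * e + s0) mod 41, (d2 * f + t0) mod 11)" if ef: "e < 41" "f < 11" for e f
    using ef(1)
  proof (induction e)
    case 0
    show ?case unfolding T2 by (rule T1[OF ef(2)])
  next
    case (Suc e)
    have e: "Suc e < 41" by (rule Suc.prems)
    have f: "f < 11" by (rule ef(2))
    have e': "e < 41" using e by simp
    have IH: "\<sigma> (e, f) = ((c1 * e + s0) mod 41, (d2 * f + t0) mod 11)" by (rule Suc.IH[OF e'])
    have "alpha (e, f) = ((1 * e + 1) mod 41, (1 * f + 0) mod 11)" unfolding alpha_aff by (rule aff_apply[OF e' f])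
    then have "alpha (e, f) = (Suc e, f)" using e f by simp
    then have "\<sigma> (Suc e, f) = A (\<sigma> (e, f))" using Ax[of "(e,f)"] e f by (simp add: Pts_def)
    also have "\<dots> = (((c1 * e + s0) mod 41 + c1) mod 41, (d2 * f + t0) mod 11)" using IH by (simp add: A2 aff_apply)
    also have "((c1 * e + s0) mod 41 + c1) mod 41 = (c1 * Suc e + s0) mod 41"
      using mod_add_left_eq[of "c1 * e + s0" 41 c1] by (simp add: algebra_simps)
    finally show "\<sigma> (Suc e, f) = ((c1 * Suc e + s0) mod 41, (d2 * f + t0) mod 11)" .
  qed
  have sig_aff: "\<sigma> = aff c1 s0 d2 t0"
  proof (rule ext)
    fix x show "\<sigma> x = aff c1 s0 d2 t0 x"
    proof (cases "x \<in> Pts")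
      case True
      obtain e f where xe: "x = (e,f)" by (cases x)
      have b: "e < 41" "f < 11" using True xe by (auto simp: Pts_def)
      have h1: "\<sigma> (e, f) = ((c1 * e + s0) mod 41, (d2 * f + t0) mod 11)" by (rule claim2[OF b])
      have h2: "aff c1 s0 d2 t0 (e, f) = ((c1 * e + s0) mod 41, (d2 * f + t0) mod 11)" by (rule aff_apply[OF b])
      show ?thesis unfolding xe by (simp only: h1 h2)
    next
      case False
      have "\<sigma> x = undefined" by (rule extensional_arb[OF Bij_imp_extensional[OF sB] False])
      moreover have "aff c1 s0 d2 t0 x = undefined" using False unfolding aff_def by simp
      ultimately show ?thesis by (rule trans[OF _ sym])
    qed
  qed
  have inj: "inj_on \<sigma> Pts" using sB by (simp add: Bij_def bij_betw_def)
  have u: "c1 mod 41 \<noteq> 0"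
  proof
    assume c: "c1 mod 41 = 0"
    have "(c1 * 1 + s0) mod 41 = (c1 mod 41 + s0) mod 41" by (simp add: mod_add_left_eq)
    then have "\<sigma> (1, 0) = \<sigma> (0, 0)" using c st_b by (simp add: sig_aff aff_apply)
    moreover have "((1, 0)::nat \<times> nat) \<in> Pts" "((0, 0)::nat \<times> nat) \<in> Pts" by (simp_all add: Pts_def)
    ultimately have "((1, 0)::nat \<times> nat) = (0, 0)" using inj_onD[OF inj] by blast
    then show False by simp
  qed
  have w: "d2 mod 11 \<noteq> 0"
  proof
    assume c: "d2 mod 11 = 0"
    have "(d2 * 1 + t0) mod 11 = (d2 mod 11 + t0) mod 11" by (simp add: mod_add_left_eq)
    then have "\<sigma> (0, 1) = \<sigma> (0, 0)" using c st_b by (simp add: sig_aff aff_apply)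
    moreover have "((0, 1)::nat \<times> nat) \<in> Pts" "((0, 0)::nat \<times> nat) \<in> Pts" by (simp_all add: Pts_def)
    ultimately have "((0, 1)::nat \<times> nat) = (0, 0)" using inj_onD[OF inj] by blast
    then show False by simp
  qed
  have "\<sigma> = aff (c1 mod 41) s0 (d2 mod 11) t0" unfolding sig_aff by (intro aff_cong) (simp_all add: cong_def)
  moreover have "c1 mod 41 \<in> {1..<41}" "d2 mod 11 \<in> {1..<11}" using u w by auto
  ultimately show ?thesis unfolding AGL_alt using st_b by blast
qed



lemma gen_pow: "x \<in> generate SG Gs \<Longrightarrow> x [^]\<^bsub>SG\<^esub> (n::nat) \<in> generate SG Gs"
proof (induction n)
  case 0 then show ?case by (simp add: generate.one)
next
  case (Suc n) then show ?case by (simp add: generate.eng)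
qed

lemma gens_car:
  assumes "Gs \<subseteq> {alpha, beta, iota, gamma a b i}" "coprime a 41" "coprime b 11"
  shows "Gs \<subseteq> carrier SG"
proof -
  have "alpha \<in> carrier SG" "beta \<in> carrier SG" by (rule alpha_car, rule beta_car)
  moreover have "iota \<in> carrier SG" unfolding iota_aff carrier_SG by (rule aff_Bij) (simp_all add: cop41)
  moreover have "gamma a b i \<in> carrier SG" unfolding gamma_aff carrier_SG using assms(2,3) by (intro aff_Bij) simp_all
  ultimately show ?thesis using assms(1) by blast
qed

lemma conj_gen:
  assumes gens: "Gs \<subseteq> {alpha, beta, iota, gamma a b i}" "alpha \<in> Gs" "beta \<in> Gs"
    and ab: "coprime a 41" "coprime b 11"
    and h: "coprime m1 41" "coprime m2 11"
    and k: "k \<in> Gs"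
  shows "aff m1 c m2 d \<otimes>\<^bsub>SG\<^esub> k \<otimes>\<^bsub>SG\<^esub> inv\<^bsub>SG\<^esub> (aff m1 c m2 d) \<in> generate SG Gs"
proof -
  interpret S: group SG by (rule grp)
  let ?h = "aff m1 c m2 d"
  have hc: "?h \<in> carrier SG" using h aff_Bij carrier_SG by simp
  have aG: "alpha \<in> generate SG Gs" "beta \<in> generate SG Gs" using gens by (auto intro: generate.incl)
  have GsC: "Gs \<subseteq> carrier SG" by (rule gens_car[OF gens(1) ab])
  have GC: "generate SG Gs \<subseteq> carrier SG" by (rule S.generate_incl[OF GsC])
  have key: "?h \<otimes>\<^bsub>SG\<^esub> aff k1 0 k2 0 \<otimes>\<^bsub>SG\<^esub> inv\<^bsub>SG\<^esub> ?h \<in> generate SG Gs"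
    if k1: "coprime k1 41" and k2: "coprime k2 11" and kG: "aff k1 0 k2 0 \<in> Gs" for k1 k2
  proof -
    define c' where "c' = c + (41 - (k1 * c) mod 41)"
    define d' where "d' = d + (11 - (k2 * d) mod 11)"
    let ?T = "alpha [^]\<^bsub>SG\<^esub> c' \<otimes>\<^bsub>SG\<^esub> beta [^]\<^bsub>SG\<^esub> d' \<otimes>\<^bsub>SG\<^esub> aff k1 0 k2 0"
    have TG: "?T \<in> generate SG Gs"
      by (rule generate.eng[OF generate.eng[OF gen_pow[OF aG(1)] gen_pow[OF aG(2)]] generate.incl[OF kG]])
    have Teq: "?T = aff k1 c' k2 d'"
      unfolding alpha_pow beta_pow using k1 k2 by (simp add: aff_mult)
    have n1: "[k1 * c + (41 - (k1 * c) mod 41) + c = 0 + c] (mod 41)"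
      by (rule cong_add[OF negmod cong_refl]) simp
    have eqc: "k1 * c + c' = k1 * c + (41 - (k1 * c) mod 41) + c" unfolding c'_def by simp
    have cc: "[k1 * c + c' = c] (mod 41)" unfolding eqc using n1 by simp
    have n2: "[k2 * d + (11 - (k2 * d) mod 11) + d = 0 + d] (mod 11)"
      by (rule cong_add[OF negmod cong_refl]) simp
    have eqd: "k2 * d + d' = k2 * d + (11 - (k2 * d) mod 11) + d" unfolding d'_def by simp
    have dd: "[k2 * d + d' = d] (mod 11)" unfolding eqd using n2 by simp
    have "?h \<otimes>\<^bsub>SG\<^esub> aff k1 0 k2 0 = aff (m1 * k1) c (m2 * k2) d"
      using h k1 k2 by (simp add: aff_mult)
    also have "\<dots> = aff (k1 * m1) (k1 * c + c') (k2 * m2) (k2 * d + d')"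
      apply (rule aff_cong)
         apply (simp add: mult.commute)
        apply (rule cong_sym[OF cc])
       apply (simp add: mult.commute)
      apply (rule cong_sym[OF dd])
      done
    also have "\<dots> = ?T \<otimes>\<^bsub>SG\<^esub> ?h" unfolding Teq using h k1 k2 by (simp add: aff_mult)
    finally have comm: "?h \<otimes>\<^bsub>SG\<^esub> aff k1 0 k2 0 = ?T \<otimes>\<^bsub>SG\<^esub> ?h" .
    have kc: "aff k1 0 k2 0 \<in> carrier SG" using kG GsC by blast
    have Tc: "?T \<in> carrier SG" using TG GC by blast
    show ?thesis using S.conj_from_comm[OF hc kc Tc comm] TG by simp
  qed
  have "k = alpha \<or> k = beta \<or> k = iota \<or> k = gamma a b i" using k gens(1) by blast
  then show ?thesis
  proof (elim disjE)
    assume ka: "k = alpha"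
    have "?h \<otimes>\<^bsub>SG\<^esub> alpha = alpha [^]\<^bsub>SG\<^esub> m1 \<otimes>\<^bsub>SG\<^esub> ?h"
      unfolding alpha_pow unfolding alpha_aff using h by (simp add: aff_mult add.commute)
    moreover have "alpha [^]\<^bsub>SG\<^esub> m1 \<in> generate SG Gs" by (rule gen_pow[OF aG(1)])
    moreover have "alpha [^]\<^bsub>SG\<^esub> m1 \<in> carrier SG" using calculation(2) GC by blast
    ultimately show ?thesis unfolding ka using S.conj_from_comm[OF hc alpha_car] by simp
  next
    assume kb: "k = beta"
    have "?h \<otimes>\<^bsub>SG\<^esub> beta = beta [^]\<^bsub>SG\<^esub> m2 \<otimes>\<^bsub>SG\<^esub> ?h"
      unfolding beta_pow unfolding beta_aff using h by (simp add: aff_mult add.commute)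
    moreover have "beta [^]\<^bsub>SG\<^esub> m2 \<in> generate SG Gs" by (rule gen_pow[OF aG(2)])
    moreover have "beta [^]\<^bsub>SG\<^esub> m2 \<in> carrier SG" using calculation(2) GC by blast
    ultimately show ?thesis unfolding kb using S.conj_from_comm[OF hc beta_car] by simp
  next
    assume ki: "k = iota"
    have kk: "aff 40 0 1 0 \<in> Gs" using k unfolding ki iota_aff .
    show ?thesis unfolding ki iota_aff by (rule key[OF _ _ kk]) (simp_all add: cop41)
  next
    assume kg: "k = gamma a b i"
    have kk: "aff (a ^ 8) 0 (b ^ (2 * i)) 0 \<in> Gs" using k unfolding kg gamma_aff .
    show ?thesis unfolding kg gamma_aff by (rule key[OF _ _ kk]) (simp_all add: ab)
  qed
qed

lemma conj_all:
  assumes gens: "Gs \<subseteq> {alpha, beta, iota, gamma a b i}" "alpha \<in> Gs" "beta \<in> Gs"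
    and ab: "coprime a 41" "coprime b 11"
    and h: "coprime m1 41" "coprime m2 11"
    and g: "g \<in> generate SG Gs"
  shows "aff m1 c m2 d \<otimes>\<^bsub>SG\<^esub> g \<otimes>\<^bsub>SG\<^esub> inv\<^bsub>SG\<^esub> (aff m1 c m2 d) \<in> generate SG Gs"
  using g
proof (induction rule: generate.induct)
  interpret S: group SG by (rule grp)
  have hc: "aff m1 c m2 d \<in> carrier SG" using h aff_Bij carrier_SG by simp
  have GsC: "Gs \<subseteq> carrier SG" by (rule gens_car[OF gens(1) ab])
  have GC: "generate SG Gs \<subseteq> carrier SG" by (rule S.generate_incl[OF GsC])
  have sub: "subgroup (generate SG Gs) SG" by (rule S.generate_is_subgroup[OF GsC])
  {
    case one
    show ?case using hc by (simp add: generate.one)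
  next
    case (incl k)
    show ?case by (rule conj_gen[OF gens ab h incl])
  next
    case (inv k)
    have kc: "k \<in> carrier SG" using inv GsC by blast
    have "aff m1 c m2 d \<otimes>\<^bsub>SG\<^esub> k \<otimes>\<^bsub>SG\<^esub> inv\<^bsub>SG\<^esub> (aff m1 c m2 d) \<in> generate SG Gs"
      by (rule conj_gen[OF gens ab h inv])
    then show ?case unfolding S.conj_inv[OF hc kc] by (rule subgroup.m_inv_closed[OF sub])
  next
    case (eng g1 g2)
    have c1: "g1 \<in> carrier SG" "g2 \<in> carrier SG" using eng.hyps GC by blast+
    show ?case unfolding S.conj_mult[OF hc c1] by (rule generate.eng[OF eng.IH])
  }
qed

lemma dir1:
  assumes gens: "Gs \<subseteq> {alpha, beta, iota, gamma a b i}" "alpha \<in> Gs" "beta \<in> Gs"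
    and ab: "coprime a 41" "coprime b 11"
    and hA: "h \<in> AGL_prod"
  shows "h \<in> normalizer SG (generate SG Gs)"
proof -
  interpret S: group SG by (rule grp)
  obtain u s w t where hd: "h = aff u s w t" and u: "u \<in> {1..<41}" and w: "w \<in> {1..<11}"
    using hA unfolding AGL_alt by blast
  have cu: "coprime u 41" using u cop41 by simp
  have cw: "coprime w 11" using w cop11 by simp
  have hc: "h \<in> carrier SG" unfolding hd carrier_SG by (rule aff_Bij[OF cu cw])
  have nu: "\<not> 41 dvd u" using u by (auto dest: dvd_imp_le)
  have nw: "\<not> 11 dvd w" using w by (auto dest: dvd_imp_le)
  have fu: "[u ^ 40 = 1] (mod 41)" using fermat_theorem[OF p41 nu] by simp
  have fw: "[w ^ 10 = 1] (mod 11)" using fermat_theorem[OF p11 nw] by simp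
  have e1: "u * u ^ 39 = u ^ 40" "w * w ^ 9 = w ^ 10" by (simp_all add: power_Suc[symmetric])
  have hinv: "inv\<^bsub>SG\<^esub> h = aff (u ^ 39) (41 - (u ^ 39 * s) mod 41) (w ^ 9) (11 - (w ^ 9 * t) mod 11)"
    unfolding hd using fu fw e1 by (intro aff_inv) simp_all
  have cu': "coprime (u ^ 39) 41" "coprime (w ^ 9) 11" using cu cw by simp_all
  have GsC: "Gs \<subseteq> carrier SG" by (rule gens_car[OF gens(1) ab])
  have GC: "generate SG Gs \<subseteq> carrier SG" by (rule S.generate_incl[OF GsC])
  have eq: "h <#\<^bsub>SG\<^esub> generate SG Gs #>\<^bsub>SG\<^esub> inv\<^bsub>SG\<^esub> h = generate SG Gs"
  proof
    show "h <#\<^bsub>SG\<^esub> generate SG Gs #>\<^bsub>SG\<^esub> inv\<^bsub>SG\<^esub> h \<subseteq> generate SG Gs"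
    proof
      fix x assume "x \<in> h <#\<^bsub>SG\<^esub> generate SG Gs #>\<^bsub>SG\<^esub> inv\<^bsub>SG\<^esub> h"
      then obtain g where g: "g \<in> generate SG Gs" and x: "x = h \<otimes>\<^bsub>SG\<^esub> g \<otimes>\<^bsub>SG\<^esub> inv\<^bsub>SG\<^esub> h"
        unfolding l_coset_def r_coset_def by blast
      show "x \<in> generate SG Gs" unfolding x hd by (rule conj_all[OF gens ab cu cw g])
    qed
  next
    show "generate SG Gs \<subseteq> h <#\<^bsub>SG\<^esub> generate SG Gs #>\<^bsub>SG\<^esub> inv\<^bsub>SG\<^esub> h"
    proof
      fix g assume g: "g \<in> generate SG Gs"
      have gc: "g \<in> carrier SG" using g GC by blast
      have "inv\<^bsub>SG\<^esub> h \<otimes>\<^bsub>SG\<^esub> g \<otimes>\<^bsub>SG\<^esub> inv\<^bsub>SG\<^esub> (inv\<^bsub>SG\<^esub> h) \<in> generate SG Gs"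
        unfolding hinv by (rule conj_all[OF gens ab cu' g])
      moreover have "g = h \<otimes>\<^bsub>SG\<^esub> (inv\<^bsub>SG\<^esub> h \<otimes>\<^bsub>SG\<^esub> g \<otimes>\<^bsub>SG\<^esub> inv\<^bsub>SG\<^esub> (inv\<^bsub>SG\<^esub> h)) \<otimes>\<^bsub>SG\<^esub> inv\<^bsub>SG\<^esub> h"
        by (rule S.conj_back[OF hc gc])
      ultimately show "g \<in> h <#\<^bsub>SG\<^esub> generate SG Gs #>\<^bsub>SG\<^esub> inv\<^bsub>SG\<^esub> h"
        unfolding l_coset_def r_coset_def by blast
    qed
  qed
  show ?thesis unfolding normalizer_def stabilizer_def using hc GC eq by simp
qed



lemma A10I: "[m1 ^ 10 = 1] (mod 41) \<Longrightarrow> [m2 ^ 10 = 1] (mod 11) \<Longrightarrow> A10 (aff m1 c m2 d)"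
  unfolding A10_def by blast

lemma main_gen:
  assumes gens: "Gs \<subseteq> {alpha, beta, iota, gamma a b i}" "alpha \<in> Gs" "beta \<in> Gs"
    and ab: "coprime a 41" "coprime b 11"
  shows "normalizer SG (generate SG Gs) = AGL_prod"
proof -
  interpret S: group SG by (rule grp)
  have totA: "totient 41 = 40" using totient_prime[OF p41] by simp
  have totB: "totient 11 = 10" using totient_prime[OF p11] by simp
  have a40: "[a ^ 40 = 1] (mod 41)" using euler_theorem[OF ab(1)] totA by simp
  have b10: "[b ^ 10 = 1] (mod 11)" using euler_theorem[OF ab(2)] totB by simp
  have pa: "(a ^ 8) ^ 10 = (a ^ 40) ^ 2" by (simp flip: power_mult)
  have pb: "(b ^ (2 * i)) ^ 10 = (b ^ 10) ^ (2 * i)" by (metis power_mult mult.commute)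
  have ga: "[(a ^ 8) ^ 10 = 1] (mod 41)" unfolding pa using cong_pow[OF a40, of 2] by simp
  have gb: "[(b ^ (2 * i)) ^ 10 = 1] (mod 11)" unfolding pb using cong_pow[OF b10, of "2 * i"] by simp
  have i40: "[(40::nat) ^ 10 = 1] (mod 41)" by (simp add: cong_def)
  have A1: "A10 (aff 1 c 1 d)" for c d unfolding A10_def
    by (rule exI[of _ 1], rule exI[of _ c], rule exI[of _ 1], rule exI[of _ d]) simp
  have GsA: "A10 k" if "k \<in> Gs" for k
  proof -
    have "k = alpha \<or> k = beta \<or> k = iota \<or> k = gamma a b i" using that gens(1) by blast
    then show ?thesis
    proof (elim disjE)
      assume "k = alpha" then show ?thesis unfolding alpha_aff by (simp only: A1)
    next
      assume "k = beta" then show ?thesis unfolding beta_aff by (simp only: A1)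
    next
      assume "k = iota" then show ?thesis unfolding iota_aff by (simp only: A10I[OF i40] cong_refl power_one)
    next
      assume "k = gamma a b i" then show ?thesis unfolding gamma_aff by (simp only: A10I[OF ga gb])
    qed
  qed
  have GA: "\<forall>g\<in>generate SG Gs. A10 g"
  proof
    fix g assume "g \<in> generate SG Gs"
    then show "A10 g"
    proof (induction rule: generate.induct)
      case one show ?case unfolding one_aff by (rule A1)
    next
      case (incl h) then show ?case by (rule GsA)
    next
      case (inv h) then show ?case by (intro A10_inv GsA)
    next
      case (eng h1 h2) then show ?case by (intro A10_mult) simp_all
    qed
  qed
  have GsC: "Gs \<subseteq> carrier SG" by (rule gens_car[OF gens(1) ab])
  have sub: "subgroup (generate SG Gs) SG" by (rule S.generate_is_subgroup[OF GsC])
  have al: "alpha \<in> generate SG Gs" "beta \<in> generate SG Gs" using gens by (auto intro: generate.incl)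
  show ?thesis
  proof
    show "normalizer SG (generate SG Gs) \<subseteq> AGL_prod"
      using dir2[OF GA al(1) al(2) sub] by blast
    show "AGL_prod \<subseteq> normalizer SG (generate SG Gs)"
      using dir1[OF gens ab] by blast
  qed
qed

theorem lemma5p1:
  fixes a b i :: nat and G :: "(nat \<times> nat \<Rightarrow> nat \<times> nat) set"
  assumes "residue_primroot 41 a" and "residue_primroot 11 b"
    and "i \<in> {1, 2, 3, 4}"
    and "G = generate (BijGroup Pts) {alpha, beta, iota, gamma a b i}
         \<or> G = generate (BijGroup Pts) {alpha, beta, gamma a b i}"
  shows "normalizer (BijGroup Pts) G = AGL_prod"
proof -
  have ca: "coprime a 41" using assms(1) by (simp add: residue_primroot_def coprime_commute)
  have cb: "coprime b 11" using assms(2) by (simp add: residue_primroot_def coprime_commute)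
  from assms(4) show ?thesis
  proof
    assume "G = generate (BijGroup Pts) {alpha, beta, iota, gamma a b i}"
    then show ?thesis using main_gen[of "{alpha, beta, iota, gamma a b i}" a b i] ca cb by simp
  next
    assume "G = generate (BijGroup Pts) {alpha, beta, gamma a b i}"
    then show ?thesis using main_gen[of "{alpha, beta, gamma a b i}" a b i] ca cb by auto
  qed
qed

end
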